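(* The big-O problem and the big-$\Theta$ problem for (non-negative) weighted automata are interreducible: each reduces to the other by a computable many-one reduction.
   Context: A (non-negative) weighted automaton is $\langle Q,\Sigma,M,F\rangle$ with finite $Q$, finite alphabet $\Sigma$, $M:\Sigma\to\mathbb{Q}_{\ge0}^{Q\times Q}$ and $F\subseteq Q$; the weight of $w=a_1\cdots a_n$ from $s$ is $\nu_s(w)=\sum_{t\in F}(M(a_1)\cdots M(a_n))_{s,t}$. State $s$ is big-O of $s'$ if there is $C>0$ with $\nu_s(w)\le C\nu_{s'}(w)$ for all $w\in\Sigma^*$; $s$ is big-$\Theta$ of $s'$ if $s$ is big-O of $s'$ and $s'$ is big-O of $s$. The big-O (resp. big-$\Theta$) problem asks, given an automaton and states $s,s'$, whether $s$ is big-O (resp. big-$\Theta$) of $s'$. *)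

theory Defs
  imports Complex_Main "HOL-Library.Nat_Bijection"
begin

datatype recf = Z | S | Proj nat | Comp recf "recf list" | Prim recf recf | Mu recf

inductive rec_eval :: "recf \<Rightarrow> nat list \<Rightarrow> nat \<Rightarrow> bool" where
  zero: "rec_eval Z xs 0"
| succ: "rec_eval S (x # xs) (Suc x)"
| proj: "i < length xs \<Longrightarrow> rec_eval (Proj i) xs (xs ! i)"
| comp: "list_all2 (\<lambda>g z. rec_eval g xs z) gs zs \<Longrightarrow> rec_eval f zs y
         \<Longrightarrow> rec_eval (Comp f gs) xs y"
| prim0: "rec_eval f xs y \<Longrightarrow> rec_eval (Prim f g) (0 # xs) y"
| primS: "rec_eval (Prim f g) (n # xs) z \<Longrightarrow> rec_eval g (n # z # xs) y
         \<Longrightarrow> rec_eval (Prim f g) (Suc n # xs) y"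
| mu: "rec_eval f (n # xs) 0 \<Longrightarrow> (\<forall>k<n. \<exists>v. v > 0 \<and> rec_eval f (k # xs) v)
         \<Longrightarrow> rec_eval (Mu f) xs n"
monos list_all2_mono

definition computable :: "(nat \<Rightarrow> nat) \<Rightarrow> bool" where
  "computable f \<longleftrightarrow> (\<exists>r. \<forall>x. rec_eval r [x] (f x))"

definition many_one_reduces :: "nat set \<Rightarrow> nat set \<Rightarrow> bool" where
  "many_one_reduces A B \<longleftrightarrow> (\<exists>f. computable f \<and> (\<forall>x. x \<in> A \<longleftrightarrow> f x \<in> B))"

text \<open>A non-negative rational is given as (numerator, denominator), denominator > 0.
  An instance: number of states n (states 0..<n), a list of transition matrices
  (one per letter, letters 0..<length), each a list of n rows of n entries,
  the final states (list), and the two states s, s'.\<close>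

record inst =
  nstates :: nat
  mats :: "(nat \<times> nat) list list list"
  finals :: "nat list"
  st1 :: nat
  st2 :: nat

definition wf_inst :: "inst \<Rightarrow> bool" where
  "wf_inst I \<longleftrightarrow> st1 I < nstates I \<and> st2 I < nstates I
     \<and> (\<forall>t\<in>set (finals I). t < nstates I)
     \<and> (\<forall>m\<in>set (mats I). length m = nstates I
          \<and> (\<forall>row\<in>set m. length row = nstates I \<and> (\<forall>e\<in>set row. snd e > 0)))"

definition entry :: "inst \<Rightarrow> nat \<Rightarrow> nat \<Rightarrow> nat \<Rightarrow> rat" where
  "entry I a p q = (let e = mats I ! a ! p ! q in of_nat (fst e) / of_nat (snd e))"

text \<open>nu p w = sum over t in F of (M(a1)...M(an))_{p,t}.\<close>
fun weight :: "inst \<Rightarrow> nat \<Rightarrow> nat list \<Rightarrow> rat" where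
  "weight I p [] = (if p \<in> set (finals I) then 1 else 0)"
| "weight I p (a # w) = (\<Sum>q<nstates I. entry I a p q * weight I q w)"

definition is_word :: "inst \<Rightarrow> nat list \<Rightarrow> bool" where
  "is_word I w \<longleftrightarrow> (\<forall>a\<in>set w. a < length (mats I))"

definition big_O :: "inst \<Rightarrow> nat \<Rightarrow> nat \<Rightarrow> bool" where
  "big_O I s s' \<longleftrightarrow> (\<exists>C::real. C > 0 \<and> (\<forall>w. is_word I w \<longrightarrow> of_rat (weight I s w) \<le> C * of_rat (weight I s' w)))"

definition big_Theta :: "inst \<Rightarrow> nat \<Rightarrow> nat \<Rightarrow> bool" where
  "big_Theta I s s' \<longleftrightarrow> big_O I s s' \<and> big_O I s' s"

definition enc_inst :: "inst \<Rightarrow> nat" where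
  "enc_inst I = list_encode
     [nstates I,
      list_encode (map (\<lambda>m. list_encode (map (\<lambda>row. list_encode (map prod_encode row)) m)) (mats I)),
      list_encode (finals I), st1 I, st2 I]"

definition BigO_problem :: "nat set" where
  "BigO_problem = {enc_inst I | I. wf_inst I \<and> big_O I (st1 I) (st2 I)}"

definition BigTheta_problem :: "nat set" where
  "BigTheta_problem = {enc_inst I | I. wf_inst I \<and> big_Theta I (st1 I) (st2 I)}"

end

theory Submission
  imports Defs
begin

definition rc :: "nat \<Rightarrow> (nat list \<Rightarrow> nat) \<Rightarrow> bool" where
  "rc k f \<longleftrightarrow> (\<exists>r. \<forall>xs. length xs = k \<longrightarrow> rec_eval r xs (f xs))"

lemma rc_cong: "rc k f \<Longrightarrow> (\<And>xs. length xs = k \<Longrightarrow> f xs = g xs) \<Longrightarrow> rc k g"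
  unfolding rc_def by metis

lemma rc_comp:
  assumes "rc m f" "length gs = m" "\<forall>g\<in>set gs. rc k g"
  shows "rc k (\<lambda>xs. f (map (\<lambda>g. g xs) gs))"
proof -
  have "\<exists>rs. list_all2 (\<lambda>r g. \<forall>xs. length xs = k \<longrightarrow> rec_eval r xs (g xs)) rs gs"
    using assms(3)
  proof (induction gs)
    case Nil then show ?case by auto
  next
    case (Cons g gs)
    then obtain rs where "list_all2 (\<lambda>r g. \<forall>xs. length xs = k \<longrightarrow> rec_eval r xs (g xs)) rs gs" by auto
    moreover from Cons.prems obtain r where "\<forall>xs. length xs = k \<longrightarrow> rec_eval r xs (g xs)"
      unfolding rc_def by auto
    ultimately show ?case by (intro exI[of _ "r # rs"]) auto
  qed
  then obtain rs where rs: "list_all2 (\<lambda>r g. \<forall>xs. length xs = k \<longrightarrow> rec_eval r xs (g xs)) rs gs" by blast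
  obtain rf where rf: "\<forall>zs. length zs = m \<longrightarrow> rec_eval rf zs (f zs)" using assms(1) unfolding rc_def by blast
  show ?thesis unfolding rc_def
  proof (intro exI allI impI)
    fix xs :: "nat list" assume len: "length xs = k"
    have "list_all2 (\<lambda>r z. rec_eval r xs z) rs (map (\<lambda>g. g xs) gs)"
      using rs len by (auto simp: list_all2_conv_all_nth)
    moreover have "rec_eval rf (map (\<lambda>g. g xs) gs) (f (map (\<lambda>g. g xs) gs))" using rf assms(2) by simp
    ultimately show "rec_eval (Comp rf rs) xs (f (map (\<lambda>g. g xs) gs))" by (rule rec_eval.comp)
  qed
qed

primrec PR :: "(nat list \<Rightarrow> nat) \<Rightarrow> (nat list \<Rightarrow> nat) \<Rightarrow> nat \<Rightarrow> nat list \<Rightarrow> nat" where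
  "PR f g 0 xs = f xs"
| "PR f g (Suc n) xs = g (n # PR f g n xs # xs)"

lemma rc_PR:
  assumes "rc k f" "rc (Suc (Suc k)) g"
  shows "rc (Suc k) (\<lambda>ys. PR f g (hd ys) (tl ys))"
proof -
  obtain rf where rf: "\<forall>xs. length xs = k \<longrightarrow> rec_eval rf xs (f xs)" using assms(1) unfolding rc_def by blast
  obtain rg where rg: "\<forall>xs. length xs = Suc (Suc k) \<longrightarrow> rec_eval rg xs (g xs)" using assms(2) unfolding rc_def by blast
  have *: "rec_eval (Prim rf rg) (n # xs) (PR f g n xs)" if "length xs = k" for n xs
  proof (induction n)
    case 0 then show ?case using rf that by (auto intro: rec_eval.prim0)
  next
    case (Suc n) then show ?case using rg that by (auto intro: rec_eval.primS)
  qed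
  show ?thesis unfolding rc_def
    by (rule exI[of _ "Prim rf rg"]) (auto simp: length_Suc_conv intro!: *)
qed

lemma rc_Mu:
  assumes "rc (Suc k) f" "\<And>xs. length xs = k \<Longrightarrow> \<exists>n. f (n # xs) = 0"
  shows "rc k (\<lambda>xs. LEAST n. f (n # xs) = 0)"
proof -
  obtain rf where rf: "\<forall>xs. length xs = Suc k \<longrightarrow> rec_eval rf xs (f xs)" using assms(1) unfolding rc_def by blast
  show ?thesis unfolding rc_def
  proof (intro exI allI impI)
    fix xs :: "nat list" assume len: "length xs = k"
    let ?n = "LEAST n. f (n # xs) = 0"
    have z: "f (?n # xs) = 0" using assms(2)[OF len] by (meson LeastI_ex)
    have "rec_eval rf (?n # xs) 0" using rf len z by (metis length_Cons)
    moreover have "\<forall>j<?n. \<exists>v. v > 0 \<and> rec_eval rf (j # xs) v"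
    proof (intro allI impI)
      fix j assume "j < ?n"
      then have "f (j # xs) \<noteq> 0" by (rule not_less_Least)
      then show "\<exists>v. v > 0 \<and> rec_eval rf (j # xs) v" using rf len by auto
    qed
    ultimately show "rec_eval (Mu rf) xs ?n" by (rule rec_eval.mu)
  qed
qed

lemma rc_PR_cong:
  assumes "rc k f" "rc (Suc (Suc k)) g" "\<And>n xs. length xs = k \<Longrightarrow> PR f g n xs = h (n # xs)"
  shows "rc (Suc k) h"
  using rc_PR[OF assms(1,2)] by (rule rc_cong) (auto simp: length_Suc_conv assms(3))

lemma rc_proj: "j < k \<Longrightarrow> rc k (\<lambda>xs. xs ! j)"
  unfolding rc_def by (auto intro: rec_eval.proj)

lemma rc_S: "rc (Suc 0) (\<lambda>xs. Suc (xs ! 0))"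
  unfolding rc_def by (rule exI[of _ S]) (auto simp: length_Suc_conv intro: rec_eval.succ)

lemma rc_Z: "rc k (\<lambda>xs. 0)"
  unfolding rc_def by (auto intro: rec_eval.zero)

lemma rc_un:
  assumes "rc (Suc 0) (\<lambda>ys. F (ys ! 0))" "rc k f"
  shows "rc k (\<lambda>xs. F (f xs))"
  using rc_comp[OF assms(1), of "[f]" k] assms by simp

lemma rc_bin:
  assumes "rc (Suc (Suc 0)) (\<lambda>ys. F (ys ! 0) (ys ! 1))" "rc k f" "rc k g"
  shows "rc k (\<lambda>xs. F (f xs) (g xs))"
  using rc_comp[OF assms(1), of "[f, g]" k] assms by simp

lemma rc_const: "rc k (\<lambda>xs. c)"
proof (induction c)
  case 0 show ?case by (rule rc_Z)
next
  case (Suc c) then show ?case using rc_un[OF rc_S, of k "\<lambda>xs. c"] by simp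
qed

lemma rc_Suc: "rc k f \<Longrightarrow> rc k (\<lambda>xs. Suc (f xs))"
  by (rule rc_un[OF rc_S])

lemma rc_add2: "rc (Suc (Suc 0)) (\<lambda>ys. ys ! 0 + ys ! 1)"
proof (rule rc_PR_cong[of _ "\<lambda>xs. xs ! 0" "\<lambda>zs. Suc (zs ! 1)"])
  show "rc (Suc 0) (\<lambda>xs. xs ! 0)" by (rule rc_proj) simp
  show "rc (Suc (Suc (Suc 0))) (\<lambda>zs. Suc (zs ! 1))" by (intro rc_Suc rc_proj) simp
  show "PR (\<lambda>xs. xs ! 0) (\<lambda>zs. Suc (zs ! 1)) n xs = (n # xs) ! 0 + (n # xs) ! 1" for n xs
    by (induction n) auto
qed

lemma rc_add: "rc k f \<Longrightarrow> rc k g \<Longrightarrow> rc k (\<lambda>xs. f xs + g xs)"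
  by (rule rc_bin[OF rc_add2])

lemma rc_mult2: "rc (Suc (Suc 0)) (\<lambda>ys. ys ! 0 * ys ! 1)"
proof (rule rc_PR_cong[of _ "\<lambda>xs. 0" "\<lambda>zs. zs ! 1 + zs ! 2"])
  show "rc (Suc 0) (\<lambda>xs. 0)" by (rule rc_Z)
  show "rc (Suc (Suc (Suc 0))) (\<lambda>zs. zs ! 1 + zs ! 2)" by (intro rc_add rc_proj) simp_all
  show "PR (\<lambda>xs. 0) (\<lambda>zs. zs ! 1 + zs ! 2) n xs = (n # xs) ! 0 * (n # xs) ! 1" for n xs
    by (induction n) auto
qed

lemma rc_mult: "rc k f \<Longrightarrow> rc k g \<Longrightarrow> rc k (\<lambda>xs. f xs * g xs)"
  by (rule rc_bin[OF rc_mult2])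

lemma rc_pred1: "rc (Suc 0) (\<lambda>ys. ys ! 0 - 1)"
proof (rule rc_PR_cong[of _ "\<lambda>xs. 0" "\<lambda>zs. zs ! 0"])
  show "rc 0 (\<lambda>xs. 0)" by (rule rc_Z)
  show "rc (Suc (Suc 0)) (\<lambda>zs. zs ! 0)" by (rule rc_proj) simp
  show "PR (\<lambda>xs. 0) (\<lambda>zs. zs ! 0) n xs = (n # xs) ! 0 - 1" for n xs
    by (induction n) auto
qed

lemma rc_diff2': "rc (Suc (Suc 0)) (\<lambda>ys. ys ! 1 - ys ! 0)"
proof (rule rc_PR_cong[of _ "\<lambda>xs. xs ! 0" "\<lambda>zs. zs ! 1 - 1"])
  show "rc (Suc 0) (\<lambda>xs. xs ! 0)" by (rule rc_proj) simp
  show "rc (Suc (Suc (Suc 0))) (\<lambda>zs. zs ! 1 - 1)" by (intro rc_un[OF rc_pred1] rc_proj) simp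
  show "PR (\<lambda>xs. xs ! 0) (\<lambda>zs. zs ! 1 - 1) n xs = (n # xs) ! 1 - (n # xs) ! 0" for n xs
    by (induction n) auto
qed

lemma rc_diff: "rc k f \<Longrightarrow> rc k g \<Longrightarrow> rc k (\<lambda>xs. f xs - g xs)"
  using rc_bin[OF rc_diff2', of k g f] by simp

lemma rc_tri1: "rc (Suc 0) (\<lambda>ys. triangle (ys ! 0))"
proof (rule rc_PR_cong[of _ "\<lambda>xs. 0" "\<lambda>zs. zs ! 1 + Suc (zs ! 0)"])
  show "rc 0 (\<lambda>xs. 0)" by (rule rc_Z)
  show "rc (Suc (Suc 0)) (\<lambda>zs. zs ! 1 + Suc (zs ! 0))" by (intro rc_add rc_Suc rc_proj) simp_all
  show "PR (\<lambda>xs. 0) (\<lambda>zs. zs ! 1 + Suc (zs ! 0)) n xs = triangle ((n # xs) ! 0)" for n xs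
    by (induction n) auto
qed

lemma rc_tri: "rc k f \<Longrightarrow> rc k (\<lambda>xs. triangle (f xs))"
  by (rule rc_un[OF rc_tri1])

lemma rc_pe: "rc k f \<Longrightarrow> rc k g \<Longrightarrow> rc k (\<lambda>xs. prod_encode (f xs, g xs))"
  unfolding prod_encode_def by (auto intro!: rc_add rc_tri)

definition rp :: "nat \<Rightarrow> (nat list \<Rightarrow> bool) \<Rightarrow> bool" where
  "rp k P \<longleftrightarrow> rc k (\<lambda>xs. if P xs then 1 else 0)"

lemma rp_less: "rc k f \<Longrightarrow> rc k g \<Longrightarrow> rp k (\<lambda>xs. f xs < g xs)"
  unfolding rp_def
  by (rule rc_cong[of k "\<lambda>xs. 1 - (1 - (g xs - f xs))"]) (auto intro!: rc_diff rc_const)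

lemma rp_eq: "rc k f \<Longrightarrow> rc k g \<Longrightarrow> rp k (\<lambda>xs. f xs = g xs)"
  unfolding rp_def
  by (rule rc_cong[of k "\<lambda>xs. (1 - (f xs - g xs)) * (1 - (g xs - f xs))"]) (auto intro!: rc_diff rc_mult rc_const)

lemma rp_and: "rp k P \<Longrightarrow> rp k Q \<Longrightarrow> rp k (\<lambda>xs. P xs \<and> Q xs)"
  unfolding rp_def
  by (rule rc_cong[of k "\<lambda>xs. (if P xs then 1 else 0) * (if Q xs then 1 else 0)"]) (auto intro!: rc_mult)

lemma rp_not: "rp k P \<Longrightarrow> rp k (\<lambda>xs. \<not> P xs)"
  unfolding rp_def
  by (rule rc_cong[of k "\<lambda>xs. 1 - (if P xs then 1 else 0)"]) (auto intro!: rc_diff rc_const)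

lemma rp_or: "rp k P \<Longrightarrow> rp k Q \<Longrightarrow> rp k (\<lambda>xs. P xs \<or> Q xs)"
  using rp_not[OF rp_and[OF rp_not rp_not], of k P Q] by simp

lemma rc_if: "rp k P \<Longrightarrow> rc k f \<Longrightarrow> rc k g \<Longrightarrow> rc k (\<lambda>xs. if P xs then f xs else g xs)"
  unfolding rp_def
  by (rule rc_cong[of k "\<lambda>xs. (if P xs then 1 else 0) * f xs + (1 - (if P xs then 1 else 0)) * g xs"])
    (auto intro!: rc_mult rc_add rc_diff rc_const)

lemma map_nth_drop: "length zs = m + k \<Longrightarrow> map (nth zs) [m..<m+k] = drop m zs"
  by (rule nth_equalityI) auto

lemma rc_drop:
  assumes "rc (Suc k) G" "rc (m + k) h"
  shows "rc (m + k) (\<lambda>zs. G (h zs # drop m zs))"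
proof -
  have "rc (m + k) (\<lambda>zs. G (map (\<lambda>g. g zs) (h # map (\<lambda>j zs. zs ! j) [m..<m+k])))"
    by (rule rc_comp[OF assms(1)]) (auto intro: assms(2) rc_proj)
  then show ?thesis by (rule rc_cong) (simp add: map_nth_drop[symmetric] comp_def)
qed

lemma rc_subst0:
  assumes "rc (Suc k) F" "rc k b"
  shows "rc k (\<lambda>xs. F (b xs # xs))"
  using rc_drop[of k F 0 b] assms by simp

lemma rp_ball:
  assumes "rp (Suc k) (\<lambda>ys. Q (ys ! 0) (tl ys))" "rc k b"
  shows "rp k (\<lambda>xs. \<forall>i<b xs. Q i xs)"
proof -
  define Qv where "Qv = (\<lambda>ys. if Q (ys ! 0) (tl ys) then 1 else (0::nat))"
  define g where "g = (\<lambda>zs. zs ! 1 * Qv (zs ! 0 # drop 2 zs))"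
  have "rc (2 + k) (\<lambda>zs. Qv (zs ! 0 # drop 2 zs))"
    by (rule rc_drop) (use assms(1) in \<open>auto simp: rp_def Qv_def intro: rc_proj\<close>)
  then have "rc (Suc (Suc k)) g" unfolding g_def by (intro rc_mult rc_proj) auto
  then have "rc (Suc k) (\<lambda>ys. PR (\<lambda>xs. 1) g (hd ys) (tl ys))"
    by (intro rc_PR rc_const)
  then have "rc k (\<lambda>xs. PR (\<lambda>xs. 1) g (b xs) xs)"
    using rc_subst0[OF _ assms(2)] by fastforce
  moreover have "PR (\<lambda>xs. 1) g n xs = (if \<forall>i<n. Q i xs then 1 else 0)" for n xs
    by (induction n) (auto simp: g_def Qv_def less_Suc_eq)
  ultimately show ?thesis unfolding rp_def by simp
qed

lemma rc_tab:
  assumes "rc (Suc k) (\<lambda>ys. g (ys ! 0) (tl ys))" "rc k b"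
  shows "rc k (\<lambda>xs. list_encode (map (\<lambda>i. g i xs) [0..<b xs]))"
proof -
  define G where "G = (\<lambda>ys. g (ys ! 0) (tl ys))"
  define st where "st = (\<lambda>zs. Suc (prod_encode (G ((zs ! 2 - Suc (zs ! 0)) # drop 3 zs), zs ! 1)))"
  have "rc (3 + k) (\<lambda>zs. G ((zs ! 2 - Suc (zs ! 0)) # drop 3 zs))"
    by (rule rc_drop) (use assms(1) in \<open>auto simp: G_def intro!: rc_diff rc_Suc rc_proj\<close>)
  then have "rc (Suc (Suc (Suc k))) (\<lambda>zs. G ((zs ! 2 - Suc (zs ! 0)) # drop 3 zs))"
    by (simp add: numeral_3_eq_3)
  then have "rc (Suc (Suc (Suc k))) st" unfolding st_def by (intro rc_Suc rc_pe rc_proj) auto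
  then have T: "rc (Suc (Suc k)) (\<lambda>ys. PR (\<lambda>xs. 0) st (hd ys) (tl ys))"
    by (intro rc_PR rc_const)
  have "rc (Suc k) (\<lambda>ys. PR (\<lambda>xs. 0) st (ys ! 0) ys)"
    using rc_subst0[OF T rc_proj[of 0 "Suc k"]] by simp
  then have "rc k (\<lambda>xs. PR (\<lambda>xs. 0) st (b xs) (b xs # xs))"
    using rc_subst0[OF _ assms(2)] by fastforce
  moreover have "j \<le> m \<Longrightarrow> PR (\<lambda>xs. 0) st j (m # xs) = list_encode (map (\<lambda>i. g i xs) [m - j..<m])" for j m xs
  proof (induction j)
    case 0 then show ?case by simp
  next
    case (Suc j)
    then have "[m - Suc j..<m] = (m - Suc j) # [m - j..<m]"
      using Suc.prems by (simp add: upt_conv_Cons Suc_diff_Suc)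
    with Suc show ?case by (simp add: st_def G_def Suc_diff_Suc)
  qed
  ultimately show ?thesis by simp
qed

lemma rc_lcons: "rc k f \<Longrightarrow> rc k (\<lambda>xs. list_encode (g xs)) \<Longrightarrow> rc k (\<lambda>xs. list_encode (f xs # g xs))"
  by (simp add: rc_Suc rc_pe)

lemma pd_char:
  "prod_decode z = (z - triangle (LEAST k. z < triangle (Suc k)), (LEAST k. z < triangle (Suc k)) - (z - triangle (LEAST k. z < triangle (Suc k))))"
proof -
  define K where "K = (LEAST k. z < triangle (Suc k))"
  have ex: "z < triangle (Suc z)" by (induction z) auto
  have hi: "z < triangle (Suc K)" unfolding K_def by (rule LeastI[of _ z], rule ex)
  have lo: "triangle K \<le> z"
  proof (cases K)
    case 0 then show ?thesis by simp
  next
    case (Suc K')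
    then have "\<not> z < triangle (Suc K')" unfolding K_def by (metis lessI not_less_Least)
    then show ?thesis using Suc by simp
  qed
  have "prod_encode (z - triangle K, K - (z - triangle K)) = z"
    using hi lo by (simp add: prod_encode_def)
  then show ?thesis unfolding K_def[symmetric] by (metis prod_encode_inverse)
qed

lemma if01_eq0: "((if P then 0 else Suc 0) = 0) = P" by simp

lemma rc_K1: "rc (Suc 0) (\<lambda>ys. LEAST k. ys ! 0 < triangle (Suc k))"
proof -
  have "rc (Suc 0) (\<lambda>xs. LEAST n. (\<lambda>ys. if ys ! 1 < triangle (Suc (ys ! 0)) then 0 else 1) (n # xs) = (0::nat))"
  proof (rule rc_Mu)
    show "rc (Suc (Suc 0)) (\<lambda>ys. if ys ! 1 < triangle (Suc (ys ! 0)) then 0 else 1)"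
      by (intro rc_if rp_less rc_tri rc_Suc rc_proj rc_const) simp_all
    show "\<exists>n. (\<lambda>ys. if ys ! 1 < triangle (Suc (ys ! 0)) then 0 else (1::nat)) (n # xs) = 0" for xs
    proof -
      have "xs ! 0 < triangle (Suc (xs ! 0))" by (induction "xs ! 0") auto
      then show ?thesis by (intro exI[of _ "xs ! 0"]) simp
    qed
  qed
  then show ?thesis by (simp only: if01_eq0 nth_Cons_0 nth_Cons_Suc One_nat_def)
qed

lemma rc_fst_pd: "rc k f \<Longrightarrow> rc k (\<lambda>xs. fst (prod_decode (f xs)))"
proof -
  have "rc (Suc 0) (\<lambda>ys. ys ! 0 - triangle (LEAST k. ys ! 0 < triangle (Suc k)))"
    by (intro rc_diff rc_tri rc_K1 rc_proj) simp
  then have "rc (Suc 0) (\<lambda>ys. fst (prod_decode (ys ! 0)))" by (simp add: pd_char)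
  then show "rc k f \<Longrightarrow> ?thesis" by (rule rc_un)
qed

lemma rc_snd_pd: "rc k f \<Longrightarrow> rc k (\<lambda>xs. snd (prod_decode (f xs)))"
proof -
  have "rc (Suc 0) (\<lambda>ys. (LEAST k. ys ! 0 < triangle (Suc k)) - (ys ! 0 - triangle (LEAST k. ys ! 0 < triangle (Suc k))))"
    by (intro rc_diff rc_tri rc_K1 rc_proj) simp
  then have "rc (Suc 0) (\<lambda>ys. snd (prod_decode (ys ! 0)))" by (simp add: pd_char)
  then show "rc k f \<Longrightarrow> ?thesis" by (rule rc_un)
qed

lemma rc_tl1: "Suc j < k \<Longrightarrow> rc k (\<lambda>xs. tl xs ! j)"
  by (rule rc_cong[OF rc_proj[of "Suc j"]]) (auto simp: nth_tl)
lemma rc_tl2: "Suc (Suc j) < k \<Longrightarrow> rc k (\<lambda>xs. tl (tl xs) ! j)"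
  by (rule rc_cong[OF rc_proj[of "Suc (Suc j)"]]) (auto simp: nth_tl)
lemma rc_tl3: "Suc (Suc (Suc j)) < k \<Longrightarrow> rc k (\<lambda>xs. tl (tl (tl xs)) ! j)"
  by (rule rc_cong[OF rc_proj[of "Suc (Suc (Suc j))"]]) (auto simp: nth_tl)

definition tlc :: "nat \<Rightarrow> nat" where "tlc c = snd (prod_decode (c - 1))"
definition nthc :: "nat \<Rightarrow> nat \<Rightarrow> nat" where "nthc i c = fst (prod_decode ((tlc ^^ i) c - 1))"
definition lenc :: "nat \<Rightarrow> nat" where "lenc c = length (list_decode c)"

lemma pd0: "prod_decode 0 = (0, 0)"
  using prod_encode_inverse[of "(0,0)"] by (simp add: prod_encode_def)

lemma tlc_enc: "tlc (list_encode xs) = list_encode (tl xs)"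
  by (cases xs) (auto simp: tlc_def pd0)

lemma itl_enc: "(tlc ^^ i) (list_encode xs) = list_encode (drop i xs)"
  by (induction i arbitrary: xs) (auto simp: tlc_enc drop_Suc tl_drop)

lemma nthc_enc: "i < length xs \<Longrightarrow> nthc i (list_encode xs) = xs ! i"
  by (simp add: nthc_def itl_enc Cons_nth_drop_Suc[symmetric])

lemma lenc_least: "lenc c = (LEAST i. (tlc ^^ i) c = 0)"
proof -
  obtain xs where c: "c = list_encode xs" by (metis list_decode_inverse)
  have "(tlc ^^ i) c = 0 \<longleftrightarrow> length xs \<le> i" for i
    using list_encode_eq[of "drop i xs" "[]"] by (simp add: c itl_enc)
  then have "(LEAST i. (tlc ^^ i) c = 0) = (LEAST i. length xs \<le> i)" by simp
  also have "\<dots> = length xs" by (rule Least_equality) auto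
  finally show ?thesis by (simp add: lenc_def c)
qed

lemma rc_tlc: "rc k f \<Longrightarrow> rc k (\<lambda>xs. tlc (f xs))"
  unfolding tlc_def by (intro rc_snd_pd rc_diff rc_const)

lemma rc_itl2: "rc (Suc (Suc 0)) (\<lambda>ys. (tlc ^^ (ys ! 0)) (ys ! 1))"
proof (rule rc_PR_cong[of _ "\<lambda>xs. xs ! 0" "\<lambda>zs. tlc (zs ! 1)"])
  show "rc (Suc 0) (\<lambda>xs. xs ! 0)" by (rule rc_proj) simp
  show "rc (Suc (Suc (Suc 0))) (\<lambda>zs. tlc (zs ! 1))" by (intro rc_tlc rc_proj) simp
  show "PR (\<lambda>xs. xs ! 0) (\<lambda>zs. tlc (zs ! 1)) n xs = (tlc ^^ ((n # xs) ! 0)) ((n # xs) ! 1)" for n xs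
    by (induction n) auto
qed

lemma rc_itl: "rc k f \<Longrightarrow> rc k g \<Longrightarrow> rc k (\<lambda>xs. (tlc ^^ f xs) (g xs))"
  by (rule rc_bin[OF rc_itl2])

lemma rc_nthc: "rc k f \<Longrightarrow> rc k g \<Longrightarrow> rc k (\<lambda>xs. nthc (f xs) (g xs))"
  unfolding nthc_def by (intro rc_fst_pd rc_diff rc_itl rc_const)

lemma rc_lenc1: "rc (Suc 0) (\<lambda>ys. lenc (ys ! 0))"
proof -
  have "rc (Suc 0) (\<lambda>xs. LEAST n. (\<lambda>ys. (tlc ^^ (ys ! 0)) (ys ! 1)) (n # xs) = 0)"
  proof (rule rc_Mu[OF rc_itl2])
    fix xs :: "nat list"
    obtain l where c: "xs ! 0 = list_encode l" by (metis list_decode_inverse)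
    show "\<exists>n. (\<lambda>ys. (tlc ^^ (ys ! 0)) (ys ! 1)) (n # xs) = 0"
      by (rule exI[of _ "length l"]) (simp add: c itl_enc)
  qed
  then show ?thesis by (simp add: lenc_least)
qed

lemma rc_lenc: "rc k f \<Longrightarrow> rc k (\<lambda>xs. lenc (f xs))"
  by (rule rc_un[OF rc_lenc1])

lemmas rc_intros = rc_const rc_proj rc_tl1 rc_tl2 rc_tl3 rc_Suc rc_add rc_mult rc_diff rc_pe
  rc_fst_pd rc_snd_pd rc_nthc rc_lenc rc_lcons rc_if rp_less rp_eq rp_and rp_or rp_not rp_ball rc_tab

definition EC :: "(nat \<Rightarrow> nat \<Rightarrow> nat \<Rightarrow> nat \<Rightarrow> bool) \<Rightarrow> nat \<Rightarrow> nat \<Rightarrow> nat \<Rightarrow> nat \<Rightarrow> nat" where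
  "EC Pc a r c x = (if a < lenc (nthc 1 x) \<and> r < nthc 0 x \<and> c < nthc 0 x
     then nthc c (nthc r (nthc a (nthc 1 x))) else if Pc a r c x then 4 else 1)"

definition GC :: "(nat \<Rightarrow> nat \<Rightarrow> nat \<Rightarrow> nat \<Rightarrow> bool) \<Rightarrow> nat \<Rightarrow> nat" where
  "GC Pc x = list_encode [Suc (Suc (nthc 0 x)),
     list_encode (map (\<lambda>a. list_encode (map (\<lambda>r. list_encode (map (\<lambda>c. EC Pc a r c x)
        [0..<Suc (Suc (nthc 0 x))])) [0..<Suc (Suc (nthc 0 x))])) [0..<Suc (Suc (lenc (nthc 1 x)))]),
     nthc 2 x, nthc 0 x, Suc (nthc 0 x)]"

definition goodC :: "nat \<Rightarrow> bool" where
  "goodC x \<longleftrightarrow> lenc x = 5 \<and> nthc 3 x < nthc 0 x \<and> nthc 4 x < nthc 0 x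
     \<and> (\<forall>t<lenc (nthc 2 x). nthc t (nthc 2 x) < nthc 0 x)
     \<and> (\<forall>a<lenc (nthc 1 x). lenc (nthc a (nthc 1 x)) = nthc 0 x
          \<and> (\<forall>r<lenc (nthc a (nthc 1 x)). lenc (nthc r (nthc a (nthc 1 x))) = nthc 0 x
               \<and> (\<forall>c<lenc (nthc r (nthc a (nthc 1 x))). 0 < snd (prod_decode (nthc c (nthc r (nthc a (nthc 1 x))))))))"

definition FF :: "(nat \<Rightarrow> nat \<Rightarrow> nat \<Rightarrow> nat \<Rightarrow> bool) \<Rightarrow> nat \<Rightarrow> nat \<Rightarrow> nat" where
  "FF Pc c0 x = (if goodC x then GC Pc x else c0)"

lemma rc_FF:
  assumes "rp (Suc (Suc (Suc (Suc 0)))) (\<lambda>ws. Pc (tl (tl ws) ! 0) (tl ws ! 0) (ws ! 0) (tl (tl (tl ws)) ! 0))"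
  shows "rc (Suc 0) (\<lambda>ys. FF Pc c0 (ys ! 0))"
  unfolding FF_def GC_def EC_def goodC_def
  apply (intro rc_intros assms)
  apply simp_all
  done

lemma computable_FF:
  assumes "rp (Suc (Suc (Suc (Suc 0)))) (\<lambda>ws. Pc (tl (tl ws) ! 0) (tl ws ! 0) (ws ! 0) (tl (tl (tl ws)) ! 0))"
  shows "computable (FF Pc c0)"
proof -
  obtain r where r: "\<forall>xs. length xs = Suc 0 \<longrightarrow> rec_eval r xs (FF Pc c0 (xs ! 0))"
    using rc_FF[OF assms, of c0] unfolding rc_def by blast
  show ?thesis unfolding computable_def
  proof (intro exI allI)
    fix x show "rec_eval r [x] (FF Pc c0 x)" using r[rule_format, of "[x]"] by simp
  qed
qed

definition dec :: "nat \<Rightarrow> inst" where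
  "dec x = \<lparr>nstates = nthc 0 x,
     mats = map (\<lambda>m. map (\<lambda>row. map prod_decode (list_decode row)) (list_decode m)) (list_decode (nthc 1 x)),
     finals = list_decode (nthc 2 x), st1 = nthc 3 x, st2 = nthc 4 x\<rparr>"

definition ext :: "inst \<Rightarrow> (nat \<Rightarrow> nat \<Rightarrow> nat \<Rightarrow> bool) \<Rightarrow> inst" where
  "ext I P = \<lparr>nstates = Suc (Suc (nstates I)),
     mats = map (\<lambda>a. map (\<lambda>r. map (\<lambda>c. if a < length (mats I) \<and> r < nstates I \<and> c < nstates I
                then mats I ! a ! r ! c else if P a r c then (1, 1) else (0, 1))
              [0..<Suc (Suc (nstates I))]) [0..<Suc (Suc (nstates I))]) [0..<Suc (Suc (length (mats I)))],
     finals = finals I, st1 = nstates I, st2 = Suc (nstates I)\<rparr>"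

lemma nthc_dec: "i < lenc c \<Longrightarrow> nthc i c = list_decode c ! i"
  using nthc_enc[of i "list_decode c"] by (simp add: lenc_def)

lemma dec_enc: "dec (enc_inst I) = I"
  by (cases I) (simp add: dec_def enc_inst_def nthc_enc comp_def map_idI del: list_encode.simps)

lemma enc_inj: "enc_inst I = enc_inst J \<Longrightarrow> I = J"
  by (metis dec_enc)

lemma lenc_enc: "lenc (enc_inst I) = 5"
  by (simp add: lenc_def enc_inst_def del: list_encode.simps)

lemma enc_dec: assumes "lenc x = 5" shows "enc_inst (dec x) = x"
proof -
  define l where "l = list_decode x"
  have x: "x = list_encode l" by (simp add: l_def)
  have "length l = 5" using assms by (simp add: l_def lenc_def)
  then have "\<exists>a b c d e. l = [a, b, c, d, e]" by (simp add: length_Suc_conv numeral_eq_Suc) blast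
  then obtain a b c d e where l: "l = [a, b, c, d, e]" by blast
  have "enc_inst (dec x) = list_encode [nthc 0 x, nthc 1 x, nthc 2 x, nthc 3 x, nthc 4 x]"
    by (simp add: dec_def enc_inst_def comp_def map_idI del: list_encode.simps)
  also have "\<dots> = x" by (simp add: x l nthc_enc del: list_encode.simps)
  finally show ?thesis .
qed

lemma lenc_le[simp]: "lenc (list_encode l) = length l"
  by (simp add: lenc_def)

lemma nthc_map[simp]: "a < length l \<Longrightarrow> nthc a (list_encode (map f l)) = f (l ! a)"
  by (simp add: nthc_enc)

lemma nthc_inst:
  "nthc 0 (enc_inst J) = nstates J"
  "nthc (Suc 0) (enc_inst J) = list_encode (map (\<lambda>m. list_encode (map (\<lambda>row. list_encode (map prod_encode row)) m)) (mats J))"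
  "nthc 2 (enc_inst J) = list_encode (finals J)"
  "nthc 3 (enc_inst J) = st1 J"
  "nthc 4 (enc_inst J) = st2 J"
  by (simp_all add: enc_inst_def nthc_enc del: list_encode.simps)

lemma goodC_enc: "goodC (enc_inst J) \<longleftrightarrow> wf_inst J"
  unfolding goodC_def wf_inst_def
  by (simp add: nthc_inst lenc_enc all_set_conv_all_nth nthc_enc del: list_encode.simps)

lemma goodC_iff: "goodC x \<longleftrightarrow> lenc x = 5 \<and> wf_inst (dec x)"
  by (metis enc_dec goodC_def goodC_enc)

lemma pe11: "prod_encode (Suc 0, Suc 0) = 4" by (simp add: prod_encode_def triangle_def)
lemma pe01: "prod_encode (0, Suc 0) = Suc 0" by (simp add: prod_encode_def triangle_def)

lemma EC_enc:
  assumes wf: "wf_inst J" and PP: "\<And>a r c. P a r c = Pc a r c (enc_inst J)"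
  shows "EC Pc a r c (enc_inst J) = prod_encode (if a < length (mats J) \<and> r < nstates J \<and> c < nstates J
                then mats J ! a ! r ! c else if P a r c then (1, 1) else (0, 1))"
proof (cases "a < length (mats J) \<and> r < nstates J \<and> c < nstates J")
  case True
  then have m: "mats J ! a \<in> set (mats J)" by simp
  then have l1: "length (mats J ! a) = nstates J" using wf by (simp add: wf_inst_def)
  then have "mats J ! a ! r \<in> set (mats J ! a)" using True by simp
  then have l2: "length (mats J ! a ! r) = nstates J" using wf m by (auto simp: wf_inst_def)
  show ?thesis using True l1 l2 by (simp add: EC_def nthc_inst del: list_encode.simps)
next
  case False
  then show ?thesis by (auto simp: EC_def nthc_inst PP pe11 pe01 simp del: list_encode.simps)
qed

lemma GC_enc:
  assumes wf: "wf_inst J" and PP: "\<And>a r c. P a r c = Pc a r c (enc_inst J)"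
  shows "GC Pc (enc_inst J) = enc_inst (ext J P)"
  unfolding GC_def
  apply (simp add: nthc_inst EC_enc[of J P Pc, OF wf PP] del: list_encode.simps)
  apply (simp add: enc_inst_def ext_def comp_def del: list_encode.simps)
  done

lemma wf_ext: assumes wf: "wf_inst I" shows "wf_inst (ext I P)"
proof -
  have "0 < snd (mats I ! a ! r ! c)" if "a < length (mats I)" "r < nstates I" "c < nstates I" for a r c
  proof -
    have m: "mats I ! a \<in> set (mats I)" using that by simp
    then have l1: "length (mats I ! a) = nstates I" using wf by (simp add: wf_inst_def)
    then have row: "mats I ! a ! r \<in> set (mats I ! a)" using that by simp
    then have l2: "length (mats I ! a ! r) = nstates I" using wf m by (auto simp: wf_inst_def)
    then have "mats I ! a ! r ! c \<in> set (mats I ! a ! r)" using that by simp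
    then show ?thesis using wf m row by (auto simp: wf_inst_def)
  qed
  then show ?thesis using wf by (auto simp: wf_inst_def ext_def)
qed

lemma reduce:
  assumes comp: "computable (FF Pc c0)"
    and PP: "\<And>J a r c. PP J a r c = Pc a r c (enc_inst J)"
    and pres: "\<And>I. wf_inst I \<Longrightarrow> QB (ext I (PP I)) = QA I"
    and c0: "c0 = enc_inst I0" "wf_inst I0" "\<not> QB I0"
  shows "many_one_reduces {enc_inst I | I. wf_inst I \<and> QA I} {enc_inst I | I. wf_inst I \<and> QB I}"
  unfolding many_one_reduces_def
proof (intro exI conjI allI)
  show "computable (FF Pc c0)" by (rule comp)
  fix x
  have key: "FF Pc c0 x = enc_inst (ext (dec x) (PP (dec x)))" if g: "goodC x"
  proof -
    have "lenc x = 5" "wf_inst (dec x)" using g goodC_iff by auto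
    then have x: "x = enc_inst (dec x)" by (simp add: enc_dec)
    have "GC Pc (enc_inst (dec x)) = enc_inst (ext (dec x) (PP (dec x)))"
      by (rule GC_enc[of "dec x" "PP (dec x)" Pc, OF \<open>wf_inst (dec x)\<close> PP])
    then show ?thesis using g x by (simp add: FF_def)
  qed
  show "x \<in> {enc_inst I | I. wf_inst I \<and> QA I} \<longleftrightarrow> FF Pc c0 x \<in> {enc_inst I | I. wf_inst I \<and> QB I}"
  proof
    assume "x \<in> {enc_inst I | I. wf_inst I \<and> QA I}"
    then obtain I where I: "x = enc_inst I" "wf_inst I" "QA I" by blast
    then have g: "goodC x" by (simp add: goodC_enc)
    have "FF Pc c0 x = enc_inst (ext I (PP I))" using key[OF g] I by (simp add: dec_enc)
    moreover have "wf_inst (ext I (PP I))" by (rule wf_ext[OF I(2)])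
    moreover have "QB (ext I (PP I))" using pres[OF I(2)] I(3) by simp
    ultimately show "FF Pc c0 x \<in> {enc_inst I | I. wf_inst I \<and> QB I}" by blast
  next
    assume "FF Pc c0 x \<in> {enc_inst I | I. wf_inst I \<and> QB I}"
    then obtain J where J: "FF Pc c0 x = enc_inst J" "wf_inst J" "QB J" by blast
    show "x \<in> {enc_inst I | I. wf_inst I \<and> QA I}"
    proof (cases "goodC x")
      case True
      then have "J = ext (dec x) (PP (dec x))" using key J(1) enc_inj by metis
      moreover have w: "lenc x = 5" "wf_inst (dec x)" using True goodC_iff by auto
      ultimately have "QA (dec x)" using pres J(3) by simp
      moreover have "x = enc_inst (dec x)" using w by (simp add: enc_dec)
      ultimately show ?thesis using w by blast
    next
      case False
      then have "J = I0" using J(1) c0(1) enc_inj by (simp add: FF_def)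
      then show ?thesis using J(3) c0(3) by simp
    qed
  qed
qed

lemma entry_nonneg: "0 \<le> entry I a p q"
  by (simp add: entry_def Let_def)

lemma weight_nonneg: "0 \<le> weight I p w"
  by (induction w arbitrary: p) (auto intro!: sum_nonneg mult_nonneg_nonneg entry_nonneg)

lemma ext_basic[simp]:
  "nstates (ext I P) = Suc (Suc (nstates I))"
  "length (mats (ext I P)) = Suc (Suc (length (mats I)))"
  "finals (ext I P) = finals I"
  "st1 (ext I P) = nstates I"
  "st2 (ext I P) = Suc (nstates I)"
  by (simp_all add: ext_def)

lemma entry_ext:
  assumes "a < Suc (Suc (length (mats I)))" "p < Suc (Suc (nstates I))" "q < Suc (Suc (nstates I))"
  shows "entry (ext I P) a p q = (if a < length (mats I) \<and> p < nstates I \<and> q < nstates I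
           then entry I a p q else if P a p q then 1 else 0)"
  using assms unfolding entry_def ext_def Let_def
  apply (simp only: inst.select_convs nth_map length_map length_upt)
  apply (simp del: upt_Suc)
  done
lemma is_word_Cons: "is_word I (a # w) \<longleftrightarrow> a < length (mats I) \<and> is_word I w"
  by (simp add: is_word_def)
lemma weight_old:
  assumes wf: "wf_inst I" and Pok: "\<And>a r c. P a r c \<Longrightarrow> nstates I \<le> r \<and> c < nstates I"
  shows "p < nstates I \<Longrightarrow> is_word (ext I P) w \<Longrightarrow>
    weight (ext I P) p w = (if is_word I w then weight I p w else 0)"
proof (induction w arbitrary: p)
  case Nil
  then show ?case by (simp add: is_word_def)
next
  case (Cons a w)
  let ?J = "ext I P" and ?n = "nstates I" and ?L = "length (mats I)"
  have a: "a < Suc (Suc ?L)" and w: "is_word ?J w" using Cons.prems by (auto simp: is_word_Cons)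
  have nP: "\<not> P a p q" for q using Pok Cons.prems(1) by force
  have "weight ?J p (a # w) = (\<Sum>q<Suc (Suc ?n). entry ?J a p q * weight ?J q w)" by simp
  also have "\<dots> = (\<Sum>q<?n. entry ?J a p q * weight ?J q w)"
    using a Cons.prems(1) by (simp add: entry_ext nP)
  also have "\<dots> = (\<Sum>q<?n. (if a < ?L then entry I a p q else 0) * (if is_word I w then weight I q w else 0))"
    using a Cons.prems(1) by (intro sum.cong refl) (simp add: entry_ext nP Cons.IH[OF _ w])
  also have "\<dots> = (if is_word I (a # w) then weight I p (a # w) else 0)"
    by (auto simp: is_word_Cons)
  finally show ?case .
qed

lemma weight_new_nil:
  assumes wf: "wf_inst I" "nstates I \<le> r"
  shows "weight (ext I P) r [] = 0"
  using assms by (auto simp: wf_inst_def)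

lemma weight_new:
  assumes wf: "wf_inst I" and Pok: "\<And>a r c. P a r c \<Longrightarrow> nstates I \<le> r \<and> c < nstates I"
    and r: "nstates I \<le> r" "r < Suc (Suc (nstates I))" and aw: "is_word (ext I P) (a # w)"
  shows "weight (ext I P) r (a # w) = (\<Sum>q<nstates I. if P a r q then weight (ext I P) q w else 0)"
proof -
  let ?J = "ext I P" and ?n = "nstates I" and ?L = "length (mats I)"
  have a: "a < Suc (Suc ?L)" using aw by (auto simp: is_word_Cons)
  have nP: "\<not> P a r q" if "?n \<le> q" for q using Pok that by force
  have "weight ?J r (a # w) = (\<Sum>q<Suc (Suc ?n). entry ?J a r q * weight ?J q w)" by simp
  also have "\<dots> = (\<Sum>q<?n. entry ?J a r q * weight ?J q w)"
    using a r by (simp add: entry_ext nP)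
  also have "\<dots> = (\<Sum>q<?n. if P a r q then weight (ext I P) q w else 0)"
    using a r by (intro sum.cong refl) (simp add: entry_ext)
  finally show ?thesis .
qed

lemma sum2:
  assumes "s < (n::nat)" "s' < n"
  shows "(\<Sum>q<n. if q = s \<or> q = s' then f q else 0) = (if s = s' then f s else f s + (f s' :: rat))"
proof (cases "s = s'")
  case True then show ?thesis using assms by (simp add: sum.delta)
next
  case False
  have "(\<Sum>q<n. if q = s \<or> q = s' then f q else 0) = (\<Sum>q<n. (if q = s then f q else 0) + (if q = s' then f q else 0))"
    using False by (intro sum.cong) auto
  also have "\<dots> = f s + f s'" using assms by (simp add: sum.distrib sum.delta)
  finally show ?thesis using False by simp
qed

lemma le_add_C: "0 \<le> (X::real) \<Longrightarrow> 0 \<le> C2 \<Longrightarrow> Y \<le> C1 * X \<Longrightarrow> Y \<le> (C1 + C2) * X"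
  by (simp add: distrib_right add_increasing2)

definition P2 :: "inst \<Rightarrow> nat \<Rightarrow> nat \<Rightarrow> nat \<Rightarrow> bool" where
  "P2 I a r c = ((a = length (mats I) \<and> ((r = nstates I \<and> c = st1 I) \<or> (r = Suc (nstates I) \<and> c = st2 I)))
     \<or> (a = Suc (length (mats I)) \<and> ((r = nstates I \<and> c = st2 I) \<or> (r = Suc (nstates I) \<and> c = st1 I))))"

definition P1 :: "inst \<Rightarrow> nat \<Rightarrow> nat \<Rightarrow> nat \<Rightarrow> bool" where
  "P1 I a r c = (a = length (mats I) \<and> ((r = nstates I \<and> (c = st1 I \<or> c = st2 I)) \<or> (r = Suc (nstates I) \<and> c = st2 I)))"

definition V :: "inst \<Rightarrow> nat \<Rightarrow> nat list \<Rightarrow> rat" where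
  "V I q w = (if is_word I w then weight I q w else 0)"

lemma V_nonneg: "0 \<le> V I q w" by (simp add: V_def weight_nonneg)

lemma word_ext: "is_word I w \<Longrightarrow> a < Suc (Suc (length (mats I))) \<Longrightarrow> is_word (ext I P) (a # w)"
  by (auto simp: is_word_def)

lemma P2_ok: "wf_inst I \<Longrightarrow> P2 I a r c \<Longrightarrow> nstates I \<le> r \<and> c < nstates I"
  by (auto simp: P2_def wf_inst_def)

lemma P1_ok: "wf_inst I \<Longrightarrow> P1 I a r c \<Longrightarrow> nstates I \<le> r \<and> c < nstates I"
  by (auto simp: P1_def wf_inst_def)

lemma T2_weights:
  assumes wf: "wf_inst I" and aw: "is_word (ext I (P2 I)) (a # w)"
  shows "weight (ext I (P2 I)) (nstates I) (a # w) =
           (if a = length (mats I) then V I (st1 I) w else if a = Suc (length (mats I)) then V I (st2 I) w else 0)"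
    and "weight (ext I (P2 I)) (Suc (nstates I)) (a # w) =
           (if a = length (mats I) then V I (st2 I) w else if a = Suc (length (mats I)) then V I (st1 I) w else 0)"
proof -
  have w: "is_word (ext I (P2 I)) w" using aw by (simp add: is_word_Cons)
  have s: "st1 I < nstates I" "st2 I < nstates I" using wf by (auto simp: wf_inst_def)
  have old: "weight (ext I (P2 I)) q w = V I q w" if "q < nstates I" for q
    using weight_old[OF wf P2_ok[OF wf] that w] by (simp add: V_def)
  have "weight (ext I (P2 I)) (nstates I) (a # w) =
      (\<Sum>q<nstates I. if P2 I a (nstates I) q then weight (ext I (P2 I)) q w else 0)"
    by (rule weight_new[OF wf P2_ok[OF wf] _ _ aw]) auto
  also have "\<dots> = (\<Sum>q<nstates I. if (a = length (mats I) \<and> q = st1 I) \<or> (a = Suc (length (mats I)) \<and> q = st2 I) then V I q w else 0)"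
    by (auto simp: P2_def old intro!: sum.cong)
  also have "\<dots> = (if a = length (mats I) then V I (st1 I) w else if a = Suc (length (mats I)) then V I (st2 I) w else 0)"
    using s by (auto simp: sum.delta)
  finally show "weight (ext I (P2 I)) (nstates I) (a # w) =
           (if a = length (mats I) then V I (st1 I) w else if a = Suc (length (mats I)) then V I (st2 I) w else 0)" .
  have "weight (ext I (P2 I)) (Suc (nstates I)) (a # w) =
      (\<Sum>q<nstates I. if P2 I a (Suc (nstates I)) q then weight (ext I (P2 I)) q w else 0)"
    by (rule weight_new[OF wf P2_ok[OF wf] _ _ aw]) auto
  also have "\<dots> = (\<Sum>q<nstates I. if (a = length (mats I) \<and> q = st2 I) \<or> (a = Suc (length (mats I)) \<and> q = st1 I) then V I q w else 0)"
    by (auto simp: P2_def old intro!: sum.cong)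
  also have "\<dots> = (if a = length (mats I) then V I (st2 I) w else if a = Suc (length (mats I)) then V I (st1 I) w else 0)"
    using s by (auto simp: sum.delta)
  finally show "weight (ext I (P2 I)) (Suc (nstates I)) (a # w) =
           (if a = length (mats I) then V I (st2 I) w else if a = Suc (length (mats I)) then V I (st1 I) w else 0)" .
qed

lemma T1_weights:
  assumes wf: "wf_inst I" and aw: "is_word (ext I (P1 I)) (a # w)"
  shows "weight (ext I (P1 I)) (nstates I) (a # w) =
           (if a = length (mats I) then (if st1 I = st2 I then V I (st1 I) w else V I (st1 I) w + V I (st2 I) w) else 0)"
    and "weight (ext I (P1 I)) (Suc (nstates I)) (a # w) =
           (if a = length (mats I) then V I (st2 I) w else 0)"
proof -
  have w: "is_word (ext I (P1 I)) w" using aw by (simp add: is_word_Cons)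
  have s: "st1 I < nstates I" "st2 I < nstates I" using wf by (auto simp: wf_inst_def)
  have old: "weight (ext I (P1 I)) q w = V I q w" if "q < nstates I" for q
    using weight_old[OF wf P1_ok[OF wf] that w] by (simp add: V_def)
  have "weight (ext I (P1 I)) (nstates I) (a # w) =
      (\<Sum>q<nstates I. if P1 I a (nstates I) q then weight (ext I (P1 I)) q w else 0)"
    by (rule weight_new[OF wf P1_ok[OF wf] _ _ aw]) auto
  also have "\<dots> = (if a = length (mats I) then (\<Sum>q<nstates I. if q = st1 I \<or> q = st2 I then V I q w else 0) else 0)"
    by (auto simp: P1_def old intro!: sum.cong)
  finally show "weight (ext I (P1 I)) (nstates I) (a # w) =
           (if a = length (mats I) then (if st1 I = st2 I then V I (st1 I) w else V I (st1 I) w + V I (st2 I) w) else 0)"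
    using s by (simp add: sum2)
  have "weight (ext I (P1 I)) (Suc (nstates I)) (a # w) =
      (\<Sum>q<nstates I. if P1 I a (Suc (nstates I)) q then weight (ext I (P1 I)) q w else 0)"
    by (rule weight_new[OF wf P1_ok[OF wf] _ _ aw]) auto
  also have "\<dots> = (\<Sum>q<nstates I. if a = length (mats I) \<and> q = st2 I then V I q w else 0)"
    by (auto simp: P1_def old intro!: sum.cong)
  also have "\<dots> = (if a = length (mats I) then V I (st2 I) w else 0)"
    using s by (auto simp: sum.delta)
  finally show "weight (ext I (P1 I)) (Suc (nstates I)) (a # w) =
           (if a = length (mats I) then V I (st2 I) w else 0)" .
qed

lemma of_rat_w_nonneg: "0 \<le> (of_rat (weight I p w) :: real)"
  using weight_nonneg by simp

lemma of_rat_V_nonneg: "0 \<le> (of_rat (V I p w) :: real)"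
  using V_nonneg by simp

lemma T2_pres:
  assumes wf: "wf_inst I"
  shows "big_O (ext I (P2 I)) (st1 (ext I (P2 I))) (st2 (ext I (P2 I))) = big_Theta I (st1 I) (st2 I)"
proof -
  let ?J = "ext I (P2 I)" and ?n = "nstates I" and ?L = "length (mats I)" and ?s = "st1 I" and ?t = "st2 I"
  have nil: "weight ?J ?n [] = 0" "weight ?J (Suc ?n) [] = 0" using weight_new_nil[OF wf] by auto
  have "big_O ?J ?n (Suc ?n) = big_Theta I ?s ?t"
  proof
    assume "big_O ?J ?n (Suc ?n)"
    then obtain C :: real where C: "C > 0" "\<forall>w. is_word ?J w \<longrightarrow> of_rat (weight ?J ?n w) \<le> C * of_rat (weight ?J (Suc ?n) w)"
      unfolding big_O_def by blast
    have "of_rat (weight I ?s w) \<le> C * of_rat (weight I ?t w)" if "is_word I w" for w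
    proof -
      have w: "is_word ?J (?L # w)" using that by (intro word_ext) auto
      then have "of_rat (weight ?J ?n (?L # w)) \<le> C * of_rat (weight ?J (Suc ?n) (?L # w))" using C(2) by blast
      then show ?thesis using that by (simp add: T2_weights[OF wf w] V_def del: weight.simps)
    qed
    moreover have "of_rat (weight I ?t w) \<le> C * of_rat (weight I ?s w)" if "is_word I w" for w
    proof -
      have w: "is_word ?J (Suc ?L # w)" using that by (intro word_ext) auto
      then have "of_rat (weight ?J ?n (Suc ?L # w)) \<le> C * of_rat (weight ?J (Suc ?n) (Suc ?L # w))" using C(2) by blast
      then show ?thesis using that by (simp add: T2_weights[OF wf w] V_def del: weight.simps)
    qed
    ultimately show "big_Theta I ?s ?t" unfolding big_Theta_def big_O_def using C(1) by blast
  next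
    assume "big_Theta I ?s ?t"
    then obtain C1 C2 :: real where C1: "C1 > 0" "\<forall>w. is_word I w \<longrightarrow> of_rat (weight I ?s w) \<le> C1 * of_rat (weight I ?t w)"
      and C2: "C2 > 0" "\<forall>w. is_word I w \<longrightarrow> of_rat (weight I ?t w) \<le> C2 * of_rat (weight I ?s w)"
      unfolding big_Theta_def big_O_def by blast
    have V1: "of_rat (V I ?s w) \<le> (C1 + C2) * of_rat (V I ?t w)" for w
    proof (cases "is_word I w")
      case True then show ?thesis using C1 C2 by (auto simp: V_def intro!: le_add_C of_rat_w_nonneg)
    qed (simp add: V_def)
    have V2: "of_rat (V I ?t w) \<le> (C1 + C2) * of_rat (V I ?s w)" for w
    proof (cases "is_word I w")
      case True then show ?thesis using C1 C2 le_add_C[of "of_rat (weight I ?s w)" C1 "of_rat (weight I ?t w)" C2]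
          weight_nonneg[of I ?s w]
        by (auto simp: V_def add.commute)
    qed (simp add: V_def)
    have "of_rat (weight ?J ?n w') \<le> (C1 + C2) * of_rat (weight ?J (Suc ?n) w')" if "is_word ?J w'" for w'
    proof (cases w')
      case Nil
      then have "weight ?J ?n w' = 0" "weight ?J (Suc ?n) w' = 0" using nil by simp_all
      then show ?thesis by simp
    next
      case (Cons a w)
      then show ?thesis using that V1 V2 by (simp add: T2_weights[OF wf that[unfolded Cons]] del: weight.simps)
    qed
    then show "big_O ?J ?n (Suc ?n)" unfolding big_O_def using C1(1) C2(1)
      by (intro exI[of _ "C1 + C2"]) auto
  qed
  then show ?thesis by simp
qed

lemma T1_pres:
  assumes wf: "wf_inst I"
  shows "big_Theta (ext I (P1 I)) (st1 (ext I (P1 I))) (st2 (ext I (P1 I))) = big_O I (st1 I) (st2 I)"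
proof -
  let ?J = "ext I (P1 I)" and ?n = "nstates I" and ?L = "length (mats I)" and ?s = "st1 I" and ?t = "st2 I"
  have nil: "weight ?J ?n [] = 0" "weight ?J (Suc ?n) [] = 0" using weight_new_nil[OF wf] by auto
  have B: "big_O ?J (Suc ?n) ?n"
  proof -
    have "of_rat (weight ?J (Suc ?n) w') \<le> (1::real) * of_rat (weight ?J ?n w')" if "is_word ?J w'" for w'
    proof (cases w')
      case Nil
      then have "weight ?J ?n w' = 0" "weight ?J (Suc ?n) w' = 0" using nil by simp_all
      then show ?thesis by simp
    next
      case (Cons a w)
      have "of_rat (V I ?t w) \<le> (of_rat (V I ?s w + V I ?t w) :: real)"
        using of_rat_V_nonneg[of I ?s w] by (simp add: of_rat_add)
      then show ?thesis using Cons that by (simp add: T1_weights[OF wf that[unfolded Cons]] del: weight.simps)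
    qed
    then show ?thesis unfolding big_O_def by (intro exI[of _ 1]) auto
  qed
  have "big_O ?J ?n (Suc ?n) = big_O I ?s ?t"
  proof
    assume "big_O ?J ?n (Suc ?n)"
    then obtain C :: real where C: "C > 0" "\<forall>w. is_word ?J w \<longrightarrow> of_rat (weight ?J ?n w) \<le> C * of_rat (weight ?J (Suc ?n) w)"
      unfolding big_O_def by blast
    have "of_rat (weight I ?s w) \<le> C * of_rat (weight I ?t w)" if "is_word I w" for w
    proof -
      have "is_word ?J (?L # w)" using that by (intro word_ext) auto
      then have *: "of_rat (weight ?J ?n (?L # w)) \<le> C * of_rat (weight ?J (Suc ?n) (?L # w))" using C(2) by blast
      have "of_rat (weight I ?s w) \<le> (of_rat (weight ?J ?n (?L # w)) :: real)"
        using that of_rat_w_nonneg[of I ?t w]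
        by (simp add: T1_weights[OF wf \<open>is_word ?J (?L # w)\<close>] V_def of_rat_add del: weight.simps)
      also have "\<dots> \<le> C * of_rat (weight I ?t w)"
        using * that by (simp add: T1_weights[OF wf \<open>is_word ?J (?L # w)\<close>] V_def del: weight.simps)
      finally show ?thesis .
    qed
    then show "big_O I ?s ?t" unfolding big_O_def using C(1) by blast
  next
    assume "big_O I ?s ?t"
    then obtain C :: real where C: "C > 0" "\<forall>w. is_word I w \<longrightarrow> of_rat (weight I ?s w) \<le> C * of_rat (weight I ?t w)"
      unfolding big_O_def by blast
    have V1: "of_rat (V I ?s w) \<le> C * of_rat (V I ?t w)" for w
      using C by (simp add: V_def)
    have "of_rat (weight ?J ?n w') \<le> (C + 1) * of_rat (weight ?J (Suc ?n) w')" if "is_word ?J w'" for w'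
    proof (cases w')
      case Nil
      then have "weight ?J ?n w' = 0" "weight ?J (Suc ?n) w' = 0" using nil by simp_all
      then show ?thesis by simp
    next
      case (Cons a w)
      have e1: "of_rat (V I ?s w) \<le> (C + 1) * (of_rat (V I ?s w) :: real)"
        using C(1) of_rat_V_nonneg[of I ?s w] by (simp add: distrib_right)
      have e2: "of_rat (V I ?s w + V I ?t w) \<le> (C + 1) * (of_rat (V I ?t w) :: real)"
        using V1[of w] by (simp add: of_rat_add distrib_right)
      show ?thesis using Cons that e1 e2 by (auto simp: T1_weights[OF wf that[unfolded Cons]] simp del: weight.simps)
    qed
    then show "big_O ?J ?n (Suc ?n)" unfolding big_O_def using C(1)
      by (intro exI[of _ "C + 1"]) auto
  qed
  then show ?thesis using B by (simp add: big_Theta_def)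
qed

definition Pc1 :: "nat \<Rightarrow> nat \<Rightarrow> nat \<Rightarrow> nat \<Rightarrow> bool" where
  "Pc1 a r c x = (a = lenc (nthc 1 x) \<and> ((r = nthc 0 x \<and> (c = nthc 3 x \<or> c = nthc 4 x)) \<or> (r = Suc (nthc 0 x) \<and> c = nthc 4 x)))"

definition Pc2 :: "nat \<Rightarrow> nat \<Rightarrow> nat \<Rightarrow> nat \<Rightarrow> bool" where
  "Pc2 a r c x = ((a = lenc (nthc 1 x) \<and> ((r = nthc 0 x \<and> c = nthc 3 x) \<or> (r = Suc (nthc 0 x) \<and> c = nthc 4 x)))
     \<or> (a = Suc (lenc (nthc 1 x)) \<and> ((r = nthc 0 x \<and> c = nthc 4 x) \<or> (r = Suc (nthc 0 x) \<and> c = nthc 3 x))))"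

lemma P1_Pc1: "P1 J a r c = Pc1 a r c (enc_inst J)"
  by (simp add: P1_def Pc1_def nthc_inst)

lemma P2_Pc2: "P2 J a r c = Pc2 a r c (enc_inst J)"
  by (simp add: P2_def Pc2_def nthc_inst)

lemma comp1: "computable (FF Pc1 c0)"
  by (rule computable_FF, unfold Pc1_def) (intro rc_intros; simp)

lemma comp2: "computable (FF Pc2 c0)"
  by (rule computable_FF, unfold Pc2_def) (intro rc_intros; simp)

definition I0 :: inst where "I0 = \<lparr>nstates = 2, mats = [], finals = [0], st1 = 0, st2 = 1\<rparr>"

lemma I0_wf: "wf_inst I0" by (simp add: I0_def wf_inst_def)

lemma I0_notO: "\<not> big_O I0 (st1 I0) (st2 I0)"
proof
  assume "big_O I0 (st1 I0) (st2 I0)"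
  then obtain C :: real where "\<forall>w. is_word I0 w \<longrightarrow> of_rat (weight I0 (st1 I0) w) \<le> C * of_rat (weight I0 (st2 I0) w)"
    unfolding big_O_def by blast
  moreover have "is_word I0 []" by (simp add: is_word_def)
  ultimately have "of_rat (weight I0 (st1 I0) []) \<le> C * of_rat (weight I0 (st2 I0) [])" by blast
  then show False by (simp add: I0_def)
qed

lemma I0_notT: "\<not> big_Theta I0 (st1 I0) (st2 I0)"
  using I0_notO by (simp add: big_Theta_def)

theorem lemma3p3:
  shows "many_one_reduces BigO_problem BigTheta_problem \<and> many_one_reduces BigTheta_problem BigO_problem"
proof
  show "many_one_reduces BigO_problem BigTheta_problem"
    unfolding BigO_problem_def BigTheta_problem_def
    by (rule reduce[where Pc = Pc1 and PP = P1 and QA = "\<lambda>I. big_O I (st1 I) (st2 I)" and QB = "\<lambda>I. big_Theta I (st1 I) (st2 I)",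
          OF comp1 P1_Pc1 T1_pres refl I0_wf I0_notT])
  show "many_one_reduces BigTheta_problem BigO_problem"
    unfolding BigO_problem_def BigTheta_problem_def
    by (rule reduce[where Pc = Pc2 and PP = P2 and QB = "\<lambda>I. big_O I (st1 I) (st2 I)" and QA = "\<lambda>I. big_Theta I (st1 I) (st2 I)",
          OF comp2 P2_Pc2 T2_pres refl I0_wf I0_notO])
qed

end
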